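(* For every integer $d\ge3$, $$\lim_{\nu\downarrow0}\frac1\nu\big(\vartheta_{d,\nu}-\vartheta_{d,0}\big)=\frac{d}{2(d-2)^2},\qquad \lim_{\nu\to\infty}\nu\big(1-\vartheta_{d,\nu}\big)=\frac2d,$$ while for every $\nu>0$, $$\lim_{d\to\infty}d\big(1-\vartheta_{d,\nu}\big)=\frac{2}{\nu+2}.$$
   Context: For $d\ge2$ and $\nu\in[0,\infty)$ let $\beta_d=\sqrt{d-1}$, $\rho_d=2\sqrt{d-1}/d$, let $\Delta_{d,\nu}$ be the continued fraction $\Delta_{d,\nu}=\cfrac{1}{a_1-\cfrac{1}{a_2-\cfrac{1}{a_3-\cdots}}}$ with $a_i=\frac{2+i\nu}{\rho_d}$, and define $\vartheta_{d,\nu}=1-\Delta_{d,\nu}/\beta_d$. *)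

theory Defs
  imports "HOL-Analysis.Analysis"
begin

fun cf_trunc :: "(nat \<Rightarrow> real) \<Rightarrow> nat \<Rightarrow> real" where
  "cf_trunc a 0 = 0"
| "cf_trunc a (Suc n) = 1 / (a 0 - cf_trunc (\<lambda>i. a (Suc i)) n)"

definition beta_d :: "nat \<Rightarrow> real" where
  "beta_d d = sqrt (real d - 1)"

definition rho_d :: "nat \<Rightarrow> real" where
  "rho_d d = 2 * sqrt (real d - 1) / real d"

definition cf_coeff :: "nat \<Rightarrow> real \<Rightarrow> nat \<Rightarrow> real" where
  "cf_coeff d \<nu> i = (2 + real i * \<nu>) / rho_d d"

definition Delta :: "nat \<Rightarrow> real \<Rightarrow> real" where
  "Delta d \<nu> = lim (\<lambda>n. cf_trunc (\<lambda>i. cf_coeff d \<nu> (Suc i)) n)"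

definition theta :: "nat \<Rightarrow> real \<Rightarrow> real" where
  "theta d \<nu> = 1 - Delta d \<nu> / beta_d d"

end

theory Submission
  imports Defs
begin

definition cfl :: "(nat \<Rightarrow> real) \<Rightarrow> real" where
  "cfl a = lim (\<lambda>n. cf_trunc a n)"

lemma trunc_bounds:
  assumes "\<forall>i. a i \<ge> 2"
  shows "0 \<le> cf_trunc a n \<and> cf_trunc a n \<le> 1"
  using assms
proof (induction n arbitrary: a)
  case 0 then show ?case by simp
next
  case (Suc n)
  have "0 \<le> cf_trunc (\<lambda>i. a (Suc i)) n \<and> cf_trunc (\<lambda>i. a (Suc i)) n \<le> 1"
    using Suc by auto
  moreover have "a 0 \<ge> 2" using Suc by auto
  ultimately show ?case by simp
qed

lemma trunc_mono_n:
  assumes "\<forall>i. a i \<ge> 2"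
  shows "cf_trunc a n \<le> cf_trunc a (Suc n)"
  using assms
proof (induction n arbitrary: a)
  case 0
  then have "a 0 \<ge> 2" by auto
  then show ?case by simp
next
  case (Suc n)
  let ?b = "\<lambda>i. a (Suc i)"
  have 1: "cf_trunc ?b n \<le> cf_trunc ?b (Suc n)" by (rule Suc.IH) (use Suc.prems in auto)
  have "\<forall>i. ?b i \<ge> 2" using Suc.prems by auto
  from trunc_bounds[OF this, of "Suc n"] have 2: "cf_trunc ?b (Suc n) \<le> 1" by blast
  have "a 0 \<ge> 2" using Suc by auto
  then have "1 / (a 0 - cf_trunc ?b n) \<le> 1 / (a 0 - cf_trunc ?b (Suc n))"
    using 1 2 by (intro divide_left_mono) auto
  then show ?case by simp
qed

lemma trunc_mono_a:
  assumes "\<forall>i. a i \<ge> 2" "\<forall>i. a i \<le> b i"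
  shows "cf_trunc b n \<le> cf_trunc a n"
  using assms
proof (induction n arbitrary: a b)
  case 0 then show ?case by simp
next
  case (Suc n)
  let ?a = "\<lambda>i. a (Suc i)" and ?b = "\<lambda>i. b (Suc i)"
  have 1: "cf_trunc ?b n \<le> cf_trunc ?a n" using Suc by auto
  have 2: "cf_trunc ?a n \<le> 1" using trunc_bounds[of ?a] Suc.prems by auto
  have "a 0 \<ge> 2" "a 0 \<le> b 0" using Suc by auto
  then have "1 / (b 0 - cf_trunc ?b n) \<le> 1 / (a 0 - cf_trunc ?a n)"
    using 1 2 by (intro divide_left_mono) auto
  then show ?case by simp
qed

lemma cfl_lim:
  assumes "\<forall>i. a i \<ge> 2"
  shows "(\<lambda>n. cf_trunc a n) \<longlonglongrightarrow> cfl a"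
proof -
  have "incseq (\<lambda>n. cf_trunc a n)"
    using trunc_mono_n[OF assms] by (simp add: incseq_SucI)
  then obtain L where "(\<lambda>n. cf_trunc a n) \<longlonglongrightarrow> L"
    using incseq_convergent[of "\<lambda>n. cf_trunc a n" 1] trunc_bounds[OF assms] by blast
  then show ?thesis unfolding cfl_def by (simp add: limI)
qed

lemma cfl_bounds:
  assumes "\<forall>i. a i \<ge> 2"
  shows "0 \<le> cfl a \<and> cfl a \<le> 1"
proof -
  note l = cfl_lim[OF assms]
  have "0 \<le> cfl a" by (rule LIMSEQ_le_const[OF l]) (use trunc_bounds[OF assms] in auto)
  moreover have "cfl a \<le> 1" by (rule LIMSEQ_le_const2[OF l]) (use trunc_bounds[OF assms] in auto)
  ultimately show ?thesis by simp
qed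

lemma cfl_rec:
  assumes "\<forall>i. a i \<ge> 2"
  shows "cfl a = 1 / (a 0 - cfl (\<lambda>i. a (Suc i)))"
proof -
  have as: "\<forall>i. (\<lambda>i. a (Suc i)) i \<ge> 2" using assms by auto
  have "(\<lambda>n. cf_trunc a (Suc n)) \<longlonglongrightarrow> cfl a"
    using cfl_lim[OF assms] by (rule LIMSEQ_Suc)
  moreover have "(\<lambda>n. cf_trunc a (Suc n)) \<longlonglongrightarrow> 1 / (a 0 - cfl (\<lambda>i. a (Suc i)))"
  proof -
    have "a 0 \<ge> 2" using assms by auto
    then have "a 0 - cfl (\<lambda>i. a (Suc i)) \<noteq> 0" using cfl_bounds[OF as] by linarith
    then have "(\<lambda>n. 1 / (a 0 - cf_trunc (\<lambda>i. a (Suc i)) n)) \<longlonglongrightarrow> 1 / (a 0 - cfl (\<lambda>i. a (Suc i)))"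
      by (intro tendsto_intros cfl_lim[OF as]) auto
    then show ?thesis by simp
  qed
  ultimately show ?thesis using LIMSEQ_unique by blast
qed

lemma cfl_mono:
  assumes "\<forall>i. a i \<ge> 2" "\<forall>i. a i \<le> b i"
  shows "cfl b \<le> cfl a"
proof -
  have "\<forall>i. b i \<ge> 2" using assms by (meson order_trans)
  then show ?thesis
    using LIMSEQ_le[OF cfl_lim cfl_lim[OF assms(1)]] trunc_mono_a[OF assms] by blast
qed

lemma cfl_bounds2:
  assumes "\<forall>i. a i \<ge> 2"
  shows "1 / a 0 \<le> cfl a \<and> cfl a \<le> 1 / (a 0 - 1)"
proof -
  have as: "\<forall>i. (\<lambda>i. a (Suc i)) i \<ge> 2" using assms by auto
  note b = cfl_bounds[OF as]
  have a0: "a 0 \<ge> 2" using assms by auto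
  have "1 / a 0 \<le> 1 / (a 0 - cfl (\<lambda>i. a (Suc i)))"
    using b a0 by (intro divide_left_mono) auto
  moreover have "1 / (a 0 - cfl (\<lambda>i. a (Suc i))) \<le> 1 / (a 0 - 1)"
    using b a0 by (intro divide_left_mono) auto
  ultimately show ?thesis using cfl_rec[OF assms] by simp
qed

lemma geo_nonneg:
  fixes g :: "nat \<Rightarrow> real"
  assumes q: "0 \<le> q" "q < 1" and rec: "\<forall>i. q * g (Suc i) \<le> g i"
    and low: "\<forall>i. - (M + N * real i) \<le> g i"
  shows "0 \<le> g i"
proof -
  have it: "q ^ n * g (i + n) \<le> g i" for n i
  proof (induction n arbitrary: i)
    case 0 then show ?case by simp
  next
    case (Suc n)
    have "q ^ Suc n * g (i + Suc n) = q * (q ^ n * g (Suc i + n))" by simp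
    also have "\<dots> \<le> q * g (Suc i)" using Suc[of "Suc i"] q by (intro mult_left_mono) auto
    also have "\<dots> \<le> g i" using rec by auto
    finally show ?case .
  qed
  have lb: "- (q ^ n * (M + N * real i) + N * (real n * q ^ n)) \<le> g i" for n
  proof -
    have "q ^ n * (- (M + N * real (i + n))) \<le> q ^ n * g (i + n)"
      by (rule mult_left_mono) (use low[rule_format, of "i+n"] q in auto)
    then show ?thesis using it[of n i] by (simp add: algebra_simps)
  qed
  have "(\<lambda>n. - (q ^ n * (M + N * real i) + N * (real n * q ^ n))) \<longlonglongrightarrow> - (0 * (M + N * real i) + N * 0)"
    using q by (intro tendsto_intros LIMSEQ_power_zero powser_times_n_limit_0) auto
  then show ?thesis using lb by (intro LIMSEQ_le_const2) auto
qed


definition alp :: "real \<Rightarrow> real \<Rightarrow> real" where "alp x r = x^2 * r / (1 - x^2)"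
definition gam :: "real \<Rightarrow> real \<Rightarrow> real" where "gam x r = alp x r / (1 - x^2)"
definition kK :: "real \<Rightarrow> real \<Rightarrow> real" where "kK x r = x * gam x r * (r + 2 * gam x r)"
definition aA :: "real \<Rightarrow> real \<Rightarrow> real" where "aA x r = kK x r / (1 - x^2)"
definition bB :: "real \<Rightarrow> real \<Rightarrow> real" where "bB x r = (2 * x^2 * aA x r + 2 * kK x r) / (1 - x^2)"
definition cC :: "real \<Rightarrow> real \<Rightarrow> real" where "cC x r = (x^2 * (aA x r + bB x r) + kK x r) / (1 - x^2)"

lemma core:
  fixes D :: "nat \<Rightarrow> real"
  assumes x: "0 < x" "x < 1" and r: "0 < r" and v: "0 \<le> \<nu>" and xc: "x * (c - x) = 1"
    and rec: "\<forall>i. D i * (c + (real i + 1) * \<nu> * r - D (Suc i)) = 1"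
    and bd: "\<forall>i. 0 \<le> D i \<and> D i \<le> x"
  shows "x - D 0 \<le> \<nu> * gam x r \<and> \<nu> * gam x r - \<nu>^2 * cC x r \<le> x - D 0"
proof -
  define q where "q = x^2"
  define \<alpha> where "\<alpha> = alp x r"
  define \<gamma> where "\<gamma> = gam x r"
  define K where "K = kK x r"
  define A where "A = aA x r"
  define B where "B = bB x r"
  define C where "C = cC x r"
  have q: "0 < q" "q < 1" using x unfolding q_def by (auto simp: power_less_one_iff)
  have q1: "1 - q \<noteq> 0" "0 < 1 - q" using q by auto
  have \<alpha>: "\<alpha> = q * r / (1 - q)" unfolding \<alpha>_def alp_def q_def ..
  have \<gamma>: "\<gamma> = \<alpha> / (1 - q)" unfolding \<gamma>_def gam_def \<alpha>_def q_def ..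
  have K: "K = x * \<gamma> * (r + 2 * \<gamma>)" unfolding K_def kK_def \<gamma>_def ..
  have A: "A = K / (1 - q)" unfolding A_def aA_def K_def q_def ..
  have B: "B = (2 * q * A + 2 * K) / (1 - q)" unfolding B_def bB_def A_def K_def q_def ..
  have C: "C = (q * (A + B) + K) / (1 - q)" unfolding C_def cC_def A_def B_def K_def q_def ..
  have \<alpha>0: "0 \<le> \<alpha>" using q r by (simp add: \<alpha>)
  have \<alpha>\<gamma>: "\<alpha> \<le> \<gamma>" unfolding \<gamma> using q \<alpha>0 by (simp add: le_divide_eq mult_left_le)
  have \<gamma>0: "0 \<le> \<gamma>" using \<alpha>0 \<alpha>\<gamma> by linarith
  have K0: "0 \<le> K" using x r \<gamma>0 by (simp add: K)
  have A0: "0 \<le> A" using K0 q by (simp add: A)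
  have B0: "0 \<le> B" using K0 A0 q by (simp add: B)
  have C0: "0 \<le> C" using K0 A0 B0 q by (simp add: C)
  define e where "e i = x - D i" for i
  have e0: "0 \<le> e i" "e i \<le> x" for i using bd x unfolding e_def by auto
  have key: "e i = x * D i * ((real i + 1) * \<nu> * r + e (Suc i))" for i
  proof -
    have "x * D i * ((real i + 1) * \<nu> * r + e (Suc i))
        = x * (D i * (c + (real i + 1) * \<nu> * r - D (Suc i))) - D i * (x * (c - x))"
      unfolding e_def by (simp add: algebra_simps)
    also have "\<dots> = x - D i" using rec xc by simp
    finally show ?thesis unfolding e_def by simp
  qed
  define U where "U i = \<nu> * (\<alpha> * real i + \<gamma>)" for i
  have \<alpha>eq: "\<alpha> = q * (r + \<alpha>)" using q1 unfolding \<alpha> by (simp add: field_simps)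
  have \<gamma>eq: "\<gamma> = q * (r + \<alpha> + \<gamma>)" using q1 \<alpha>eq unfolding \<gamma> by (simp add: field_simps)
  have Ueq: "U i = q * ((real i + 1) * \<nu> * r + U (Suc i))" for i
  proof -
    have "q * ((real i + 1) * \<nu> * r + U (Suc i)) = \<nu> * (q * (r + \<alpha>) * real i + q * (r + \<alpha> + \<gamma>))"
      unfolding U_def by (simp add: algebra_simps)
    also have "\<dots> = U i" unfolding U_def using \<alpha>eq \<gamma>eq by simp
    finally show ?thesis by simp
  qed
  have U0: "0 \<le> U i" for i unfolding U_def using v \<alpha>0 \<gamma>0 by simp
  have eup: "e i \<le> q * ((real i + 1) * \<nu> * r + e (Suc i))" for i
  proof -
    have s0: "0 \<le> (real i + 1) * \<nu> * r + e (Suc i)" using v r e0 by simp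
    have "x * D i \<le> x * x" using bd x by (simp add: mult_left_mono)
    then have "x * D i * ((real i + 1) * \<nu> * r + e (Suc i)) \<le> x * x * ((real i + 1) * \<nu> * r + e (Suc i))"
      using s0 by (rule mult_right_mono)
    then show ?thesis using key[of i] unfolding q_def by (simp add: power2_eq_square)
  qed
  have eU: "e i \<le> U i" for i
  proof -
    have "0 \<le> U i - e i"
    proof (rule geo_nonneg[where q = q and M = x and N = 0])
      show "0 \<le> q" "q < 1" using q by auto
      show "\<forall>i. q * (U (Suc i) - e (Suc i)) \<le> U i - e i"
      proof
        fix i
        have "q * (U (Suc i) - e (Suc i)) = q * ((real i + 1) * \<nu> * r + U (Suc i)) - q * ((real i + 1) * \<nu> * r + e (Suc i))"
          by (simp add: algebra_simps)
        then show "q * (U (Suc i) - e (Suc i)) \<le> U i - e i" using Ueq[of i] eup[of i] by linarith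
      qed
      show "\<forall>i. - (x + 0 * real i) \<le> U i - e i"
      proof
        fix i show "- (x + 0 * real i) \<le> U i - e i" using U0[of i] e0(2)[of i] by simp
      qed
    qed
    then show ?thesis by simp
  qed
  define R where "R i = A * (real i)^2 + B * real i + C" for i
  have Req: "R i = q * R (Suc i) + K * (real i + 1)^2" for i
  proof -
    have a: "A = q * A + K" using q1 unfolding A by (simp add: field_simps)
    have b: "B = q * (2 * A + B) + 2 * K" using q1 unfolding B by (simp add: field_simps)
    have c: "C = q * (A + B + C) + K" using q1 unfolding C by (simp add: field_simps)
    have "q * R (Suc i) + K * (real i + 1)^2
       = (q * A + K) * (real i)^2 + (q * (2 * A + B) + 2 * K) * real i + (q * (A + B + C) + K)"
      unfolding R_def by (simp add: algebra_simps power2_eq_square)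
    also have "\<dots> = R i" unfolding R_def using a b c by simp
    finally show ?thesis by simp
  qed
  have R0: "0 \<le> R i" for i unfolding R_def using A0 B0 C0 by simp
  have elow: "q * ((real i + 1) * \<nu> * r + e (Suc i)) - \<nu>^2 * K * (real i + 1)^2 \<le> e i" for i
  proof -
    define s where "s = (real i + 1) * \<nu> * r + e (Suc i)"
    have s0: "0 \<le> s" using v r e0 unfolding s_def by simp
    have eis: "e i = q * s - x * e i * s" using key[of i] unfolding s_def q_def e_def
      by (simp add: algebra_simps power2_eq_square)
    have ei: "e i \<le> \<nu> * \<gamma> * (real i + 1)"
    proof -
      have "\<alpha> * real i + \<gamma> \<le> \<gamma> * (real i + 1)" using \<alpha>\<gamma> by (simp add: algebra_simps mult_right_mono)
      then have "U i \<le> \<nu> * \<gamma> * (real i + 1)" unfolding U_def using v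
        by (metis mult.assoc mult_left_mono)
      then show ?thesis using eU[of i] by linarith
    qed
    have sb: "s \<le> \<nu> * (real i + 1) * (r + 2 * \<gamma>)"
    proof -
      have h1: "\<alpha> * (real i + 1) \<le> \<gamma> * (real i + 1)" using \<alpha>\<gamma> by (intro mult_right_mono) auto
      have h2: "\<gamma> * 1 \<le> \<gamma> * (real i + 1)" using \<gamma>0 by (intro mult_left_mono) auto
      have h3: "\<alpha> * real (Suc i) = \<alpha> * (real i + 1)" by simp
      have "\<alpha> * real (Suc i) + \<gamma> \<le> 2 * \<gamma> * (real i + 1)" using h1 h2 h3 by linarith
      then have "U (Suc i) \<le> \<nu> * (2 * \<gamma> * (real i + 1))" unfolding U_def using v
        by (rule mult_left_mono)
      then show ?thesis using eU[of "Suc i"] unfolding s_def by (simp add: algebra_simps)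
    qed
    have p0: "0 \<le> \<nu> * \<gamma> * (real i + 1)" using v \<gamma>0 by simp
    have "e i * s \<le> (\<nu> * \<gamma> * (real i + 1)) * (\<nu> * (real i + 1) * (r + 2 * \<gamma>))"
      by (rule mult_mono[OF ei sb p0 s0])
    then have "x * (e i * s) \<le> x * ((\<nu> * \<gamma> * (real i + 1)) * (\<nu> * (real i + 1) * (r + 2 * \<gamma>)))"
      using x by (intro mult_left_mono) auto
    then have "x * e i * s \<le> x * (\<nu> * \<gamma> * (real i + 1)) * (\<nu> * (real i + 1) * (r + 2 * \<gamma>))"
      by (simp add: mult.assoc)
    also have "\<dots> = \<nu>^2 * K * (real i + 1)^2" unfolding K by (simp add: algebra_simps power2_eq_square)
    finally show ?thesis using eis unfolding s_def by linarith
  qed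
  define L where "L i = U i - \<nu>^2 * R i" for i
  have Leq: "L i = q * ((real i + 1) * \<nu> * r + L (Suc i)) - \<nu>^2 * K * (real i + 1)^2" for i
  proof -
    have "L i = q * ((real i + 1) * \<nu> * r + U (Suc i)) - \<nu>^2 * (q * R (Suc i) + K * (real i + 1)^2)"
      unfolding L_def using Ueq[of i] Req[of i] by simp
    then show ?thesis unfolding L_def by (simp add: algebra_simps)
  qed
  have eL: "L i \<le> e i" for i
  proof -
    have "0 \<le> e i - L i"
    proof (rule geo_nonneg[where q = q and M = "\<nu> * \<gamma>" and N = "\<nu> * \<alpha>"])
      show "0 \<le> q" "q < 1" using q by auto
      show "\<forall>i. q * (e (Suc i) - L (Suc i)) \<le> e i - L i"
      proof
        fix i
        have "q * ((real i + 1) * \<nu> * r + e (Suc i)) - q * ((real i + 1) * \<nu> * r + L (Suc i))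
            = q * (e (Suc i) - L (Suc i))" by (simp add: algebra_simps)
        then show "q * (e (Suc i) - L (Suc i)) \<le> e i - L i" using elow[of i] Leq[of i] by linarith
      qed
      show "\<forall>i. - (\<nu> * \<gamma> + \<nu> * \<alpha> * real i) \<le> e i - L i"
      proof
        fix i
        have "0 \<le> \<nu>^2 * R i" using R0 by simp
        then show "- (\<nu> * \<gamma> + \<nu> * \<alpha> * real i) \<le> e i - L i"
          using e0[of i] unfolding L_def U_def by (simp add: algebra_simps)
      qed
    qed
    then show ?thesis by simp
  qed
  have "U 0 = \<nu> * \<gamma>" "R 0 = C" unfolding U_def R_def by simp_all
  then show ?thesis using eU[of 0] eL[of 0] unfolding L_def e_def \<gamma>_def C_def by simp
qed


lemma dfacts:
  assumes "d \<ge> (3::nat)"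
  shows "beta_d d > 1" "(beta_d d)^2 = real d - 1" "rho_d d > 0" "rho_d d \<le> 1"
    "2 / rho_d d = real d / beta_d d" "real d / beta_d d \<ge> 2" "rho_d d / beta_d d = 2 / real d"
proof -
  have d: "real d \<ge> 3" using assms by simp
  show b1: "beta_d d > 1" unfolding beta_d_def using d by simp
  show b2: "(beta_d d)^2 = real d - 1" unfolding beta_d_def using d by simp
  have sq: "2 * beta_d d \<le> real d"
  proof -
    have "beta_d d \<le> sqrt ((real d / 2)^2)" unfolding beta_d_def
    proof (rule real_sqrt_le_mono)
      have "(real d / 2)^2 - (real d - 1) = (real d - 2)^2 / 4" by (simp add: power2_eq_square field_simps)
      moreover have "(real d - 2)^2 / 4 \<ge> 0" by simp
      ultimately show "real d - 1 \<le> (real d / 2)^2" by linarith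
    qed
    then show ?thesis using d by simp
  qed
  show r0: "rho_d d > 0" unfolding rho_d_def using d by simp
  show "rho_d d \<le> 1" unfolding rho_d_def using sq d by (simp add: beta_d_def)
  show "2 / rho_d d = real d / beta_d d" unfolding rho_d_def beta_d_def using d by simp
  show "real d / beta_d d \<ge> 2" using sq b1 by (simp add: le_divide_eq)
  show "rho_d d / beta_d d = 2 / real d" unfolding rho_d_def beta_d_def using d by simp
qed

lemma coeff_eq:
  assumes "d \<ge> (3::nat)"
  shows "cf_coeff d \<nu> i = real d / beta_d d + real i * \<nu> * (1 / rho_d d)"
  using dfacts(5)[OF assms, symmetric] unfolding cf_coeff_def by (simp add: add_divide_distrib)

lemma coeff_ge2:
  assumes "d \<ge> (3::nat)" "0 \<le> \<nu>"
  shows "real d / beta_d d \<le> cf_coeff d \<nu> i" "2 \<le> cf_coeff d \<nu> i"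
proof -
  show "real d / beta_d d \<le> cf_coeff d \<nu> i"
    unfolding coeff_eq[OF assms(1)] using assms(2) dfacts(3)[OF assms(1)] by simp
  then show "2 \<le> cf_coeff d \<nu> i" using dfacts(6)[OF assms(1)] by linarith
qed

lemma Delta_cfl: "Delta d \<nu> = cfl (\<lambda>i. cf_coeff d \<nu> (Suc i))"
  unfolding Delta_def cfl_def ..

lemma cfl_const:
  assumes "d \<ge> (3::nat)"
  shows "cfl (\<lambda>_. real d / beta_d d) = 1 / beta_d d"
proof -
  define c where "c = real d / beta_d d"
  define b where "b = beta_d d"
  define D where "D = cfl (\<lambda>_. c)"
  have c2: "c \<ge> 2" unfolding c_def using dfacts(6)[OF assms] .
  have b1: "b > 1" unfolding b_def using dfacts(1)[OF assms] .
  have cb: "c = b + 1 / b" unfolding c_def b_def using dfacts(2)[OF assms] dfacts(1)[OF assms]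
    by (simp add: field_simps power2_eq_square)
  have D01: "0 \<le> D" "D \<le> 1" unfolding D_def using cfl_bounds[of "\<lambda>_. c"] c2 by auto
  have "D = 1 / (c - D)" unfolding D_def using cfl_rec[of "\<lambda>_. c"] c2 by simp
  then have "D * (c - D) = 1" using D01 c2 by (simp add: field_simps)
  then have "(D - 1 / b) * (D - b) = 0" unfolding cb using b1 by (simp add: field_simps)
  then have "D = 1 / b" using D01 b1 by auto
  then show ?thesis unfolding D_def c_def b_def .
qed

lemma ratio_lim:
  fixes k :: real
  shows "((\<lambda>v. v / (v + k)) \<longlongrightarrow> 1) at_top"
proof -
  have lim: "((\<lambda>v. 1 - k / (k + v)) \<longlongrightarrow> 1 - 0) at_top"
    by (intro tendsto_intros tendsto_divide_0[OF tendsto_const] filterlim_at_top_imp_at_infinity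
        filterlim_tendsto_add_at_top[OF tendsto_const] filterlim_ident)
  have "eventually (\<lambda>v. 1 - k / (k + v) = v / (v + k)) at_top"
    using eventually_gt_at_top[of "-k"] by eventually_elim (simp add: field_simps)
  then show ?thesis using lim by (simp add: tendsto_cong)
qed


lemma Delta0:
  assumes "d \<ge> (3::nat)"
  shows "Delta d 0 = 1 / beta_d d"
proof -
  have "(\<lambda>i. cf_coeff d 0 (Suc i)) = (\<lambda>_. real d / beta_d d)"
    using coeff_eq[OF assms] by simp
  then show ?thesis unfolding Delta_cfl using cfl_const[OF assms] by simp
qed

lemma Delta_bounds:
  assumes "d \<ge> (3::nat)" "0 \<le> \<nu>"
  shows "1 / cf_coeff d \<nu> 1 \<le> Delta d \<nu> \<and> Delta d \<nu> \<le> 1 / (cf_coeff d \<nu> 1 - 1)"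
  using cfl_bounds2[of "\<lambda>i. cf_coeff d \<nu> (Suc i)"] coeff_ge2[OF assms] unfolding Delta_cfl by simp

lemma core_inst:
  assumes d3: "d \<ge> (3::nat)" and v: "0 \<le> \<nu>"
  shows "1 / beta_d d - Delta d \<nu> \<le> \<nu> * gam (1 / beta_d d) (1 / rho_d d)
     \<and> \<nu> * gam (1 / beta_d d) (1 / rho_d d) - \<nu>^2 * cC (1 / beta_d d) (1 / rho_d d) \<le> 1 / beta_d d - Delta d \<nu>"
proof -
  define b where "b = beta_d d"
  define x where "x = 1 / b"
  define r where "r = 1 / rho_d d"
  define c where "c = real d / b"
  define D where "D i = cfl (\<lambda>k. cf_coeff d \<nu> (Suc (k + i)))" for i
  have b1: "b > 1" unfolding b_def using dfacts(1)[OF d3] .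
  have b2: "b^2 = real d - 1" unfolding b_def using dfacts(2)[OF d3] .
  have ge2: "\<forall>k. 2 \<le> cf_coeff d \<nu> (Suc (k + i))" for i using coeff_ge2[OF d3 v] by blast
  have Db: "0 \<le> D i \<and> D i \<le> 1" for i unfolding D_def using cfl_bounds[OF ge2] .
  have Dx: "D i \<le> x" for i
  proof -
    have "cfl (\<lambda>k. cf_coeff d \<nu> (Suc (k + i))) \<le> cfl (\<lambda>_. real d / beta_d d)"
      by (rule cfl_mono) (use coeff_ge2[OF d3 v] dfacts(6)[OF d3] in auto)
    then show ?thesis unfolding D_def x_def b_def using cfl_const[OF d3] by simp
  qed
  have coef: "cf_coeff d \<nu> (Suc i) = c + (real i + 1) * \<nu> * r" for i
    unfolding c_def b_def r_def coeff_eq[OF d3] by simp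
  have rec: "D i * (c + (real i + 1) * \<nu> * r - D (Suc i)) = 1" for i
  proof -
    have "D i = 1 / (cf_coeff d \<nu> (Suc i) - D (Suc i))"
      unfolding D_def using cfl_rec[OF ge2[of i]] by simp
    moreover have "cf_coeff d \<nu> (Suc i) - D (Suc i) \<ge> 1"
      using ge2[of i, rule_format, of 0] Db[of "Suc i"] by simp
    ultimately show ?thesis unfolding coef by simp
  qed
  have xc: "x * (c - x) = 1" unfolding x_def c_def using b1 b2
    by (simp add: field_simps power2_eq_square)
  have r0: "0 < r" unfolding r_def using dfacts(3)[OF d3] by simp
  have x0: "0 < x" "x < 1" unfolding x_def using b1 by auto
  have "x - D 0 \<le> \<nu> * gam x r \<and> \<nu> * gam x r - \<nu>^2 * cC x r \<le> x - D 0"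
    by (rule core[OF x0 r0 v xc]) (use rec Db Dx in auto)
  moreover have "D 0 = Delta d \<nu>" unfolding D_def Delta_cfl by simp
  ultimately show ?thesis unfolding x_def b_def r_def by simp
qed

lemma gam_val:
  assumes d3: "d \<ge> (3::nat)"
  shows "gam (1 / beta_d d) (1 / rho_d d) / beta_d d = real d / (2 * (real d - 2)^2)"
proof -
  have b1: "beta_d d > 1" using dfacts(1)[OF d3] .
  have b2: "(beta_d d)^2 = real d - 1" using dfacts(2)[OF d3] .
  have d: "real d \<ge> 3" using d3 by simp
  have x2: "(1 / beta_d d)^2 = 1 / (real d - 1)" using b2 by (simp add: power_divide)
  have r: "1 / rho_d d = real d / (2 * beta_d d)" unfolding rho_d_def beta_d_def by simp
  have "gam (1 / beta_d d) (1 / rho_d d) / beta_d d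
      = (1 / (real d - 1)) * (real d / (2 * (beta_d d)^2)) / (1 - 1 / (real d - 1))^2"
    unfolding gam_def alp_def x2 r by (simp add: power2_eq_square field_simps)
  also have "\<dots> = real d / (2 * (real d - 2)^2)"
  proof -
    have n1: "real d - 1 \<noteq> 0" "real d - 2 \<noteq> 0" using d by auto
    have e1: "1 - 1 / (real d - 1) = (real d - 2) / (real d - 1)" using n1 by (simp add: field_simps)
    have h: "(t / (2 * u)) / (w / u) = t / (2 * w)" if "u \<noteq> 0" "w \<noteq> 0" for t u w :: real
      using that by (simp add: field_simps)
    have h2: "1 / (real d - 1) * (real d / (2 * (real d - 1))) = real d / (2 * (real d - 1)^2)"
      by (simp add: power2_eq_square)
    show ?thesis unfolding b2 e1 power_divide h2 using n1 by (intro h) auto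
  qed
  finally show ?thesis .
qed

lemma lim1:
  assumes d3: "d \<ge> (3::nat)"
  shows "((\<lambda>\<nu>. (theta d \<nu> - theta d 0) / \<nu>) \<longlongrightarrow> real d / (2 * (real d - 2)^2)) (at_right 0)"
proof -
  define b where "b = beta_d d"
  define G where "G = gam (1 / beta_d d) (1 / rho_d d)"
  define K where "K = cC (1 / beta_d d) (1 / rho_d d)"
  have b1: "b > 1" unfolding b_def using dfacts(1)[OF d3] .
  have eq: "(theta d \<nu> - theta d 0) / \<nu> = (1 / b - Delta d \<nu>) / (b * \<nu>)" for \<nu>
    unfolding theta_def Delta0[OF d3] b_def using dfacts(1)[OF d3] by (cases "\<nu> = 0") (simp_all add: field_simps)
  have up: "eventually (\<lambda>\<nu>. (theta d \<nu> - theta d 0) / \<nu> \<le> G / b) (at_right 0)"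
    using eventually_at_right_less[of "0::real"]
  proof eventually_elim
    case (elim \<nu>)
    have "1 / b - Delta d \<nu> \<le> \<nu> * G" using core_inst[OF d3, of \<nu>] elim unfolding G_def b_def by simp
    then have "(1 / b - Delta d \<nu>) / (b * \<nu>) \<le> (\<nu> * G) / (b * \<nu>)"
      using b1 elim by (intro divide_right_mono) auto
    then show ?case unfolding eq using elim by simp
  qed
  have lo: "eventually (\<lambda>\<nu>. G / b - \<nu> * K / b \<le> (theta d \<nu> - theta d 0) / \<nu>) (at_right 0)"
    using eventually_at_right_less[of "0::real"]
  proof eventually_elim
    case (elim \<nu>)
    have "\<nu> * G - \<nu>^2 * K \<le> 1 / b - Delta d \<nu>" using core_inst[OF d3, of \<nu>] elim
      unfolding G_def K_def b_def by simp
    then have "(\<nu> * G - \<nu>^2 * K) / (b * \<nu>) \<le> (1 / b - Delta d \<nu>) / (b * \<nu>)"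
      using b1 elim by (intro divide_right_mono) auto
    moreover have "(\<nu> * G - \<nu>^2 * K) / (b * \<nu>) = G / b - \<nu> * K / b"
      using elim b1 by (simp add: field_simps power2_eq_square)
    ultimately show ?case unfolding eq by simp
  qed
  have l1: "((\<lambda>\<nu>. G / b - \<nu> * K / b) \<longlongrightarrow> G / b - 0 * K / b) (at_right 0)"
    using b1 by (intro tendsto_intros) auto
  have "((\<lambda>\<nu>. (theta d \<nu> - theta d 0) / \<nu>) \<longlongrightarrow> G / b) (at_right 0)"
    by (rule tendsto_sandwich[OF lo up]) (use l1 in auto)
  moreover have "G / b = real d / (2 * (real d - 2)^2)" unfolding G_def b_def using gam_val[OF d3] .
  ultimately show ?thesis by simp
qed


lemma lim2:
  assumes d3: "d \<ge> (3::nat)"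
  shows "((\<lambda>\<nu>. \<nu> * (1 - theta d \<nu>)) \<longlongrightarrow> 2 / real d) at_top"
proof -
  define b where "b = beta_d d"
  define p where "p = rho_d d"
  have b1: "b > 1" unfolding b_def using dfacts(1)[OF d3] .
  have p0: "p > 0" "p \<le> 1" unfolding p_def using dfacts(3,4)[OF d3] by auto
  have pb: "p / b = 2 / real d" unfolding p_def b_def using dfacts(7)[OF d3] .
  have c1: "cf_coeff d \<nu> 1 = (2 + \<nu>) / p" for \<nu> unfolding cf_coeff_def p_def by simp
  have th: "\<nu> * (1 - theta d \<nu>) = (\<nu> / b) * Delta d \<nu>" for \<nu> unfolding theta_def b_def by simp
  have lo: "eventually (\<lambda>\<nu>. (p / b) * (\<nu> / (\<nu> + 2)) \<le> \<nu> * (1 - theta d \<nu>)) at_top"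
    using eventually_gt_at_top[of "0::real"]
  proof eventually_elim
    case (elim \<nu>)
    have "1 / cf_coeff d \<nu> 1 \<le> Delta d \<nu>" using Delta_bounds[OF d3, of \<nu>] elim by simp
    then have "(\<nu> / b) * (1 / cf_coeff d \<nu> 1) \<le> (\<nu> / b) * Delta d \<nu>"
      using elim b1 by (intro mult_left_mono) auto
    moreover have "(\<nu> / b) * (1 / cf_coeff d \<nu> 1) = (p / b) * (\<nu> / (\<nu> + 2))"
      unfolding c1 using elim p0 b1 by (simp add: field_simps)
    ultimately show ?case unfolding th by simp
  qed
  have up: "eventually (\<lambda>\<nu>. \<nu> * (1 - theta d \<nu>) \<le> (p / b) * (\<nu> / (\<nu> + (2 - p)))) at_top"
    using eventually_gt_at_top[of "0::real"]
  proof eventually_elim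
    case (elim \<nu>)
    have "Delta d \<nu> \<le> 1 / (cf_coeff d \<nu> 1 - 1)" using Delta_bounds[OF d3, of \<nu>] elim by simp
    then have "(\<nu> / b) * Delta d \<nu> \<le> (\<nu> / b) * (1 / (cf_coeff d \<nu> 1 - 1))"
      using elim b1 by (intro mult_left_mono) auto
    moreover have "(\<nu> / b) * (1 / (cf_coeff d \<nu> 1 - 1)) = (p / b) * (\<nu> / (\<nu> + (2 - p)))"
    proof -
      have "2 + \<nu> - p > 0" using elim p0 by simp
      then show ?thesis unfolding c1 using elim p0 b1 by (simp add: field_simps)
    qed
    ultimately show ?case unfolding th by simp
  qed
  have "((\<lambda>\<nu>. \<nu> * (1 - theta d \<nu>)) \<longlongrightarrow> (p / b) * 1) at_top"
    by (rule tendsto_sandwich[OF lo up]) (intro tendsto_intros ratio_lim)+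
  then show ?thesis using pb by simp
qed

lemma rho_lim: "((\<lambda>d. rho_d d) \<longlongrightarrow> 0) sequentially"
proof -
  have l: "((\<lambda>d. 2 / sqrt (real d)) \<longlongrightarrow> 0) sequentially"
    by (intro tendsto_divide_0[OF tendsto_const] filterlim_at_top_imp_at_infinity
        filterlim_compose[OF sqrt_at_top filterlim_real_sequentially])
  have lo: "eventually (\<lambda>d. 0 \<le> rho_d d) sequentially"
    unfolding rho_d_def using eventually_ge_at_top[of "1::nat"] by eventually_elim simp
  have up: "eventually (\<lambda>d. rho_d d \<le> 2 / sqrt (real d)) sequentially"
    using eventually_ge_at_top[of "1::nat"]
  proof eventually_elim
    case (elim d)
    have "sqrt (real d - 1) \<le> sqrt (real d)" by simp
    then have "2 * sqrt (real d - 1) / real d \<le> 2 * sqrt (real d) / real d"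
      by (intro divide_right_mono) auto
    also have "2 * sqrt (real d) / real d = 2 / sqrt (real d)"
    proof -
      have "sqrt (real d) * sqrt (real d) = real d" by simp
      moreover have "sqrt (real d) > 0" using elim by simp
      ultimately show ?thesis by (metis nonzero_mult_div_cancel_left less_irrefl times_divide_eq_right
            divide_divide_eq_right mult.commute)
    qed
    finally show ?case unfolding rho_d_def .
  qed
  show ?thesis by (rule tendsto_sandwich[OF lo up]) (auto intro: l)
qed

lemma lim3:
  assumes v: "\<nu> > (0::real)"
  shows "((\<lambda>d::nat. real d * (1 - theta d \<nu>)) \<longlongrightarrow> 2 / (\<nu> + 2)) sequentially"
proof -
  have lo: "eventually (\<lambda>d. 2 / (\<nu> + 2) \<le> real d * (1 - theta d \<nu>)) sequentially"
    using eventually_ge_at_top[of "3::nat"]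
  proof eventually_elim
    case (elim d)
    define b where "b = beta_d d"
    define p where "p = rho_d d"
    have b1: "b > 1" unfolding b_def using dfacts(1)[OF elim] .
    have p0: "p > 0" "p \<le> 1" unfolding p_def using dfacts(3,4)[OF elim] by auto
    have pb: "p / b = 2 / real d" unfolding p_def b_def using dfacts(7)[OF elim] .
    have c1: "cf_coeff d \<nu> 1 = (2 + \<nu>) / p" unfolding cf_coeff_def p_def by simp
    have th: "real d * (1 - theta d \<nu>) = (real d / b) * Delta d \<nu>" unfolding theta_def b_def by simp
    have "1 / cf_coeff d \<nu> 1 \<le> Delta d \<nu>" using Delta_bounds[OF elim, of \<nu>] v by simp
    then have ineq: "(real d / b) * (1 / cf_coeff d \<nu> 1) \<le> (real d / b) * Delta d \<nu>"
      using b1 by (intro mult_left_mono) auto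
    have "2 / (\<nu> + 2) = real d * (p / b) / (\<nu> + 2)" unfolding pb using elim by simp
    also have "\<dots> = (real d / b) * (1 / cf_coeff d \<nu> 1)"
      unfolding c1 using v p0 b1 by (simp add: field_simps)
    also have "\<dots> \<le> (real d / b) * Delta d \<nu>" by (rule ineq)
    also have "\<dots> = real d * (1 - theta d \<nu>)" unfolding th ..
    finally show ?case .
  qed
  have up: "eventually (\<lambda>d. real d * (1 - theta d \<nu>) \<le> 2 / (\<nu> + 2 - rho_d d)) sequentially"
    using eventually_ge_at_top[of "3::nat"]
  proof eventually_elim
    case (elim d)
    define b where "b = beta_d d"
    define p where "p = rho_d d"
    have b1: "b > 1" unfolding b_def using dfacts(1)[OF elim] .
    have p0: "p > 0" "p \<le> 1" unfolding p_def using dfacts(3,4)[OF elim] by auto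
    have pb: "p / b = 2 / real d" unfolding p_def b_def using dfacts(7)[OF elim] .
    have c1: "cf_coeff d \<nu> 1 = (2 + \<nu>) / p" unfolding cf_coeff_def p_def by simp
    have th: "real d * (1 - theta d \<nu>) = (real d / b) * Delta d \<nu>" unfolding theta_def b_def by simp
    have "Delta d \<nu> \<le> 1 / (cf_coeff d \<nu> 1 - 1)" using Delta_bounds[OF elim, of \<nu>] v by simp
    then have ineq: "(real d / b) * Delta d \<nu> \<le> (real d / b) * (1 / (cf_coeff d \<nu> 1 - 1))"
      using b1 by (intro mult_left_mono) auto
    have "real d * (1 - theta d \<nu>) = (real d / b) * Delta d \<nu>" unfolding th ..
    also have "\<dots> \<le> (real d / b) * (1 / (cf_coeff d \<nu> 1 - 1))" by (rule ineq)
    also have "\<dots> = real d * (p / b) / (\<nu> + 2 - p)"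
    proof -
      have "2 + \<nu> - p > 0" using v p0 by simp
      then show ?thesis unfolding c1 using v p0 b1 by (simp add: field_simps)
    qed
    also have "\<dots> = 2 / (\<nu> + 2 - p)" unfolding pb using elim by simp
    finally show ?case unfolding p_def .
  qed
  have l: "((\<lambda>d. 2 / (\<nu> + 2 - rho_d d)) \<longlongrightarrow> 2 / (\<nu> + 2 - 0)) sequentially"
    using v by (intro tendsto_intros rho_lim) auto
  show ?thesis by (rule tendsto_sandwich[OF lo up]) (use l in auto)
qed

theorem proposition2p8:
  shows "(\<forall>d::nat. d \<ge> 3 \<longrightarrow>
            ((\<lambda>\<nu>. (theta d \<nu> - theta d 0) / \<nu>) \<longlongrightarrow> real d / (2 * (real d - 2)^2)) (at_right 0)
          \<and> ((\<lambda>\<nu>. \<nu> * (1 - theta d \<nu>)) \<longlongrightarrow> 2 / real d) at_top)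
       \<and> (\<forall>\<nu>::real. \<nu> > 0 \<longrightarrow>
            ((\<lambda>d::nat. real d * (1 - theta d \<nu>)) \<longlongrightarrow> 2 / (\<nu> + 2)) sequentially)"
  using lim1 lim2 lim3 by blast

end
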